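(* Let $N,d\in\mathbb{N}^*$ and $\alpha>0$. For $i\neq j$ in $\{1,\dots,N\}$ let $\Psi_{ij}:\mathbb{R}^{2dN}\to\mathbb{R}_+$ be non-negative, bounded and locally Lipschitz, and consider the system $$\frac{dx_i}{dt}(t)=v_i(t),\qquad \frac{dv_i}{dt}(t)=\alpha\sum_{j=1}^N Q_t(i,j)\,(v_j(t)-v_i(t)),\qquad i\in\{1,\dots,N\},$$ where $x_i(t),v_i(t)\in\mathbb{R}^d$, $Q_t(i,j)=\Psi_{ij}\big((x_1(t),v_1(t)),\dots,(x_N(t),v_N(t))\big)$ for $i\neq j$ and $Q_t(i,i)=-\sum_{j\neq i}Q_t(i,j)$. Then for any initial data the solution exists and is unique on $\mathbb{R}_+$. Moreover, for every $m\in\{1,\dots,d\}$, setting $f_m(i)=v_i^m(0)$ (the $m$-th coordinate of $v_i(0)$), for every $T>0$, every $t\in[0,T]$ and every $i$, $$v_i^m(t)=p^{(T)}_{0,t}f_m(i)=\mathbb{E}\left(f_m\big(Y^{(T)}_T\big)\ \middle|\ Y^{(T)}_{T-t}=i\right),$$ where $(Y^{(T)}_t)_{t\in[0,T]}$ is a $\{1,\dots,N\}$-valued time-inhomogeneous Markov jump process with generator $(\alpha Q_{T-t})_{t\in[0,T]}$ (the $Q_t$ being evaluated along the solution), and $p^{(T)}_{s,t}=P^{(T)}_{T-t,T-s}$ with $P^{(T)}_{s,t}(i,j)=\mathbb{P}(Y^{(T)}_t=j\mid Y^{(T)}_s=i)$. Finally, with $V(t)=\sup_{i,j}\|v_i(t)-v_j(t)\|_2$,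 we have $V(t)\le V(s)$ for all $0\le s\le t$.
   Context: $\|\cdot\|_2$ is the Euclidean norm on $\mathbb{R}^d$. For a matrix $p$ and a function $f:\{1,\dots,N\}\to\mathbb{R}$, $pf(i)=\sum_j p(i,j)f(j)$. A time-inhomogeneous Markov jump process with generator $(G_t)$ jumps from $i$ to $j\ne i$ at time $t$ with rate $G_t(i,j)$. *)

theory Defs
  imports "HOL-Analysis.Analysis"
begin

text \<open>Configurations: particle indices form a finite type 'n (N = CARD('n)),
  each particle has position and velocity in real^'d (d = CARD('d)).\<close>

type_synonym ('d,'n) config = "((real^'d) \<times> (real^'d))^'n"

definition Qmat :: "('n::finite \<Rightarrow> 'n \<Rightarrow> ('d::finite,'n) config \<Rightarrow> real)
    \<Rightarrow> ('d,'n) config \<Rightarrow> 'n \<Rightarrow> 'n \<Rightarrow> real" where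
  "Qmat Psi z i j = (if i = j then - (\<Sum>k\<in>UNIV - {i}. Psi i k z) else Psi i j z)"

definition rhs :: "real \<Rightarrow> ('n::finite \<Rightarrow> 'n \<Rightarrow> ('d::finite,'n) config \<Rightarrow> real)
    \<Rightarrow> ('d,'n) config \<Rightarrow> ('d,'n) config" where
  "rhs \<alpha> Psi z = (\<chi> i. (snd (z $ i),
      \<alpha> *\<^sub>R (\<Sum>j\<in>UNIV. Qmat Psi z i j *\<^sub>R (snd (z $ j) - snd (z $ i)))))"

definition is_solution :: "real \<Rightarrow> ('n::finite \<Rightarrow> 'n \<Rightarrow> ('d::finite,'n) config \<Rightarrow> real)
    \<Rightarrow> ('d,'n) config \<Rightarrow> (real \<Rightarrow> ('d,'n) config) \<Rightarrow> bool" where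
  "is_solution \<alpha> Psi z0 z \<longleftrightarrow> z 0 = z0 \<and>
     (\<forall>t\<ge>0. (z has_vector_derivative rhs \<alpha> Psi (z t)) (at t within {0..}))"

text \<open>P is the transition function (P s u i j = Prob(Y_u = j | Y_s = i), 0 \<le> s \<le> u \<le> T)
  of the time-inhomogeneous Markov jump process on the finite state space 'n with
  (continuous) generator (G u)_{u \<in> [0,T]}: characterized by the Kolmogorov forward equation
  d/du P s u = P s u G u, P s s = Id.\<close>
definition markov_transition :: "real \<Rightarrow> (real \<Rightarrow> 'n::finite \<Rightarrow> 'n \<Rightarrow> real)
    \<Rightarrow> (real \<Rightarrow> real \<Rightarrow> 'n \<Rightarrow> 'n \<Rightarrow> real) \<Rightarrow> bool" where
  "markov_transition T G P \<longleftrightarrow>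
     (\<forall>s\<in>{0..T}. (\<forall>i j. P s s i j = (if i = j then 1 else 0)) \<and>
        (\<forall>u\<in>{s..T}. \<forall>i j. ((\<lambda>r. P s r i j) has_real_derivative
              (\<Sum>k\<in>UNIV. P s u i k * G u k j)) (at u within {s..T})))"

definition Vdiam :: "('d::finite,'n::finite) config \<Rightarrow> real" where
  "Vdiam z = (SUP i. SUP j. norm (snd (z $ i) - snd (z $ j)))"

end

theory Submission
  imports Defs
begin

lemma cont_comp_lip:
  fixes f :: "real \<Rightarrow> 'a::real_normed_vector \<Rightarrow> 'b::real_normed_vector"
  assumes lip: "\<And>t x y. t \<in> S \<Longrightarrow> norm (f t x - f t y) \<le> L * norm (x - y)"
    and cont: "\<And>y. continuous_on S (\<lambda>t. f t y)"
    and y: "continuous_on S y"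
  shows "continuous_on S (\<lambda>t. f t (y t))"
  unfolding continuous_on_def
proof
  fix t0 assume t0: "t0 \<in> S"
  have 1: "((\<lambda>t. f t (y t0)) \<longlongrightarrow> f t0 (y t0)) (at t0 within S)"
    using cont[of "y t0"] t0 by (simp add: continuous_on_def)
  have g: "((\<lambda>t. L * norm (y t - y t0)) \<longlongrightarrow> 0) (at t0 within S)"
  proof -
    have "((\<lambda>t. y t - y t0) \<longlongrightarrow> y t0 - y t0) (at t0 within S)"
      by (intro tendsto_intros) (use y t0 in \<open>simp add: continuous_on_def\<close>)
    from tendsto_mult_left[OF tendsto_norm[OF this], of L] show ?thesis by simp
  qed
  have 2: "((\<lambda>t. f t (y t) - f t (y t0)) \<longlongrightarrow> 0) (at t0 within S)"
    apply (rule Lim_null_comparison[OF _ g])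
    unfolding eventually_at_filter using lip by (auto intro!: always_eventually)
  have "((\<lambda>t. (f t (y t) - f t (y t0)) + f t (y t0)) \<longlongrightarrow> 0 + f t0 (y t0)) (at t0 within S)"
    by (rule tendsto_add[OF 2 1])
  then show "((\<lambda>t. f t (y t)) \<longlongrightarrow> f t0 (y t0)) (at t0 within S)" by simp
qed

primrec pic :: "(real \<Rightarrow> 'a \<Rightarrow> 'a) \<Rightarrow> real \<Rightarrow> 'a \<Rightarrow> nat \<Rightarrow> real \<Rightarrow> 'a::banach" where
  "pic f a x0 0 = (\<lambda>t. x0)"
| "pic f a x0 (Suc n) = (\<lambda>t. x0 + integral {a..t} (\<lambda>s. f s (pic f a x0 n s)))"

lemma picard:
  fixes f :: "real \<Rightarrow> 'a::euclidean_space \<Rightarrow> 'a" and C :: "'a set"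
  assumes ab: "a \<le> b" and L: "0 \<le> L"
    and lip: "\<And>t x y. t \<in> {a..b} \<Longrightarrow> norm (f t x - f t y) \<le> L * norm (x - y)"
    and cont: "\<And>y. continuous_on {a..b} (\<lambda>t. f t y)"
    and C: "closed C" "x0 \<in> C"
    and inv: "\<And>y t. continuous_on {a..b} y \<Longrightarrow> (\<forall>s\<in>{a..b}. y s \<in> C) \<Longrightarrow> t \<in> {a..b} \<Longrightarrow>
        x0 + integral {a..t} (\<lambda>s. f s (y s)) \<in> C"
  shows "\<exists>x. x a = x0 \<and> (\<forall>t\<in>{a..b}. (x has_vector_derivative f t (x t)) (at t within {a..b}) \<and> x t \<in> C)"
proof -
  define p where "p = pic f a x0"
  have cc: "\<And>y. continuous_on {a..b} y \<Longrightarrow> continuous_on {a..b} (\<lambda>t. f t (y t))"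
    by (rule cont_comp_lip[OF lip cont])
  have ps: "p (Suc n) = (\<lambda>t. x0 + integral {a..t} (\<lambda>s. f s (p n s)))" for n by (simp add: p_def)
  have p0: "p 0 = (\<lambda>t. x0)" by (simp add: p_def)
  have int_deriv: "((\<lambda>t. integral {a..t} (\<lambda>s. f s (y s))) has_vector_derivative f t (y t)) (at t within {a..b})"
    if "continuous_on {a..b} y" "t\<in>{a..b}" for y t
    using integral_has_vector_derivative[OF cc[OF that(1)] that(2)] by simp
  have pc: "continuous_on {a..b} (p n) \<and> (\<forall>t\<in>{a..b}. p n t \<in> C)" for n
  proof (induction n)
    case 0 show ?case using C by (simp add: p0)
  next
    case (Suc n)
    have "continuous_on {a..b} (p (Suc n))"
      unfolding ps
      apply (rule continuous_on_add[OF continuous_on_const])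
      unfolding continuous_on_eq_continuous_within
      using int_deriv[OF Suc[THEN conjunct1]] has_vector_derivative_continuous by blast
    moreover have "\<forall>t\<in>{a..b}. p (Suc n) t \<in> C"
      using inv Suc by (simp add: ps)
    ultimately show ?case ..
  qed
  have "compact ((\<lambda>s. f s x0) ` {a..b})" by (rule compact_continuous_image[OF cont compact_Icc])
  then obtain M0 where M0: "M0 > 0" "\<And>s. s\<in>{a..b} \<Longrightarrow> norm (f s x0) \<le> M0"
    using compact_imp_bounded bounded_pos by (metis imageI)
  define M where "M = M0"
  have M: "0 \<le> M" "\<And>s. s\<in>{a..b} \<Longrightarrow> norm (f s x0) \<le> M" using M0 by (auto simp: M_def)
  define G where "G n t = M * L^n * (t-a)^(Suc n) / fact (Suc n)" for n t
  define g where "g n t = M * L^n * (t-a)^n / fact n" for n t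
  have Gd: "(G n has_vector_derivative g n t) (at t within S)" for n t S
  proof -
    have "((\<lambda>t. (t-a)^(Suc n)) has_real_derivative real (Suc n) * (t-a)^n) (at t within S)"
      by (auto intro!: derivative_eq_intros) (cases n; auto simp: algebra_simps)
    from DERIV_cdivide[OF DERIV_cmult[OF this, of "M * L^n"], of "fact (Suc n)"]
    have "(G n has_real_derivative M * L^n * (real (Suc n) * (t-a)^n) / fact (Suc n)) (at t within S)"
      unfolding G_def by simp
    moreover have "M * L^n * (real (Suc n) * (t-a)^n) / fact (Suc n) = g n t"
      unfolding g_def fact_Suc by (simp add: field_simps del: of_nat_Suc)
    ultimately have "(G n has_real_derivative g n t) (at t within S)" by simp
    then show ?thesis by (simp add: has_real_derivative_iff_has_vector_derivative)
  qed
  have gint: "(g n has_integral G n t) {a..t}" if "a \<le> t" for n t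
    using fundamental_theorem_of_calculus[OF that, of "G n" "g n"] Gd by (simp add: G_def)
  have bound: "\<forall>t\<in>{a..b}. norm (p (Suc n) t - p n t) \<le> G n t" for n
  proof (induction n)
    case 0
    show ?case
    proof
      fix t assume t: "t \<in> {a..b}"
      have sub: "{a..t} \<subseteq> {a..b}" using t by auto
      have "norm (p (Suc 0) t - p 0 t) = norm (integral {a..t} (\<lambda>s. f s x0))" by (simp add: ps p0)
      also have "\<dots> \<le> integral {a..t} (g 0)"
        apply (rule integral_norm_bound_integral)
        using integrable_continuous_real[OF continuous_on_subset[OF cont sub]] apply simp
        using gint[of t 0] t apply auto[1]
        using M sub by (auto simp: g_def)
      also have "\<dots> = G 0 t" using gint t by (simp add: integral_unique)
      finally show "norm (p (Suc 0) t - p 0 t) \<le> G 0 t" .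
    qed
  next
    case (Suc n)
    show ?case
    proof
      fix t assume t: "t \<in> {a..b}"
      have sub: "{a..t} \<subseteq> {a..b}" using t by auto
      have i1: "(\<lambda>s. f s (p (Suc n) s)) integrable_on {a..t}" "(\<lambda>s. f s (p n s)) integrable_on {a..t}"
        using pc cc continuous_on_subset[OF _ sub] integrable_continuous_real by blast+
      have "norm (p (Suc (Suc n)) t - p (Suc n) t) = norm (integral {a..t} (\<lambda>s. f s (p (Suc n) s) - f s (p n s)))"
        using i1 by (simp add: ps integral_diff del: p_def)
      also have "\<dots> \<le> integral {a..t} (g (Suc n))"
      proof (rule integral_norm_bound_integral)
        show "(\<lambda>s. f s (p (Suc n) s) - f s (p n s)) integrable_on {a..t}" using i1 by (rule integrable_diff)
        show "g (Suc n) integrable_on {a..t}" using gint[of t "Suc n"] t by auto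
        fix s assume s: "s \<in> {a..t}"
        have "norm (f s (p (Suc n) s) - f s (p n s)) \<le> L * norm (p (Suc n) s - p n s)"
          using lip s sub by blast
        also have "\<dots> \<le> L * G n s" using Suc s sub L by (auto intro!: mult_left_mono)
        also have "\<dots> = g (Suc n) s" by (simp add: G_def g_def)
        finally show "norm (f s (p (Suc n) s) - f s (p n s)) \<le> g (Suc n) s" .
      qed
      also have "\<dots> = G (Suc n) t" using gint t by (simp add: integral_unique)
      finally show "norm (p (Suc (Suc n)) t - p (Suc n) t) \<le> G (Suc n) t" .
    qed
  qed
  define H where "H n = M * (b-a) * ((L*(b-a))^n / fact n)" for n
  have GH: "G n t \<le> H n" if t: "t\<in>{a..b}" for n t
  proof -
    have "G n t \<le> M * L^n * (b-a)^(Suc n) / fact (Suc n)"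
      unfolding G_def using t M L
      by (intro divide_right_mono mult_left_mono power_mono) auto
    also have "\<dots> \<le> M * L^n * (b-a)^(Suc n) / fact n"
      using M L ab by (intro divide_left_mono) (auto simp: fact_mono)
    also have "\<dots> = H n" by (simp add: H_def power_mult_distrib)
    finally show ?thesis .
  qed
  have sH: "summable H"
    unfolding H_def
    using summable_mult[OF summable_exp_generic[of "L*(b-a)"], of "M * (b-a)"]
    by (simp add: divide_inverse mult.commute)
  define d where "d k t = p (Suc k) t - p k t" for k t
  have ul: "uniform_limit {a..b} (\<lambda>n t. \<Sum>k<n. d k t) (\<lambda>t. suminf (\<lambda>k. d k t)) sequentially"
    by (rule Weierstrass_m_test[OF _ sH]) (use bound GH order_trans in \<open>unfold d_def; blast\<close>)
  have tel: "(\<Sum>k<n. d k t) = p n t - x0" for n t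
    unfolding d_def using sum_lessThan_telescope[of "\<lambda>k. p k t" n] by (simp add: p0)
  define X where "X t = x0 + suminf (\<lambda>k. d k t)" for t
  have ulp: "uniform_limit {a..b} p X sequentially"
    using ul unfolding uniform_limit_iff tel X_def
    by (simp add: dist_norm algebra_simps)
  have Xc: "continuous_on {a..b} X"
    by (rule uniform_limit_theorem[OF _ ulp]) (use pc in auto)
  have XC: "X t \<in> C" if "t \<in> {a..b}" for t
    using Lim_in_closed_set[OF C(1) _ _ tendsto_uniform_limitI[OF ulp that]] pc that by auto
  have Xeq: "X t = x0 + integral {a..t} (\<lambda>s. f s (X s))" if t: "t \<in> {a..b}" for t
  proof -
    have sub: "{a..t} \<subseteq> {a..b}" using t by auto
    have u2: "uniform_limit {a..t} (\<lambda>n s. f s (p n s)) (\<lambda>s. f s (X s)) sequentially"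
      unfolding uniform_limit_iff
    proof (intro allI impI)
      fix e :: real assume e: "e > 0"
      then have "e / (L+1) > 0" using L by simp
      then have "\<forall>\<^sub>F n in sequentially. \<forall>s\<in>{a..b}. dist (p n s) (X s) < e / (L+1)"
        using ulp unfolding uniform_limit_iff by blast
      then show "\<forall>\<^sub>F n in sequentially. \<forall>s\<in>{a..t}. dist (f s (p n s)) (f s (X s)) < e"
      proof eventually_elim
        case (elim n)
        show ?case
        proof
          fix s assume s: "s \<in> {a..t}"
          have "dist (f s (p n s)) (f s (X s)) \<le> L * dist (p n s) (X s)"
            using lip[of s] s sub by (auto simp: dist_norm)
          also have "\<dots> \<le> L * (e / (L+1))" proof (rule mult_left_mono[OF _ L])
            show "dist (p n s) (X s) \<le> e / (L+1)" using elim s sub by (auto intro: less_imp_le)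
          qed
          also have "\<dots> < e" using L e by (simp add: field_simps)
          finally show "dist (f s (p n s)) (f s (X s)) < e" .
        qed
      qed
    qed
    obtain I J where IJ: "\<And>n. ((\<lambda>s. f s (p n s)) has_integral I n) {a..t}"
      "((\<lambda>s. f s (X s)) has_integral J) {a..t}" "(I \<longlonglongrightarrow> J)"
      using uniform_limit_integral[OF u2] pc cc continuous_on_subset[OF _ sub] by (metis trivial_limit_sequentially)
    have "(\<lambda>n. p (Suc n) t) \<longlonglongrightarrow> X t"
      using tendsto_uniform_limitI[OF ulp t] by (rule LIMSEQ_Suc)
    moreover have "(\<lambda>n. p (Suc n) t) = (\<lambda>n. x0 + I n)"
      using IJ(1) by (auto simp: ps integral_unique)
    ultimately have "(\<lambda>n. x0 + I n) \<longlonglongrightarrow> X t" by simp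
    moreover have "(\<lambda>n. x0 + I n) \<longlonglongrightarrow> x0 + J" using IJ(3) by (intro tendsto_intros)
    ultimately have "X t = x0 + J" by (rule LIMSEQ_unique)
    then show ?thesis using IJ(2) by (simp add: integral_unique)
  qed
  define x where "x t = x0 + integral {a..t} (\<lambda>s. f s (X s))" for t
  have "x a = x0" by (simp add: x_def)
  moreover have "(x has_vector_derivative f t (x t)) (at t within {a..b}) \<and> x t \<in> C" if t: "t\<in>{a..b}" for t
  proof
    have "(x has_vector_derivative 0 + f t (X t)) (at t within {a..b})"
      unfolding x_def by (intro has_vector_derivative_add has_vector_derivative_const int_deriv Xc t)
    then show "(x has_vector_derivative f t (x t)) (at t within {a..b})"
      using Xeq[OF t] by (simp add: x_def)
    show "x t \<in> C" using XC[OF t] Xeq[OF t] by (simp add: x_def)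
  qed
  ultimately show ?thesis by blast
qed

lemma gronwall_sq:
  fixes y :: "real \<Rightarrow> 'a::real_inner"
  assumes ab: "a \<le> b"
    and d: "\<And>t. t\<in>{a..b} \<Longrightarrow> (y has_vector_derivative y' t) (at t within {a..b})"
    and le: "\<And>t. t\<in>{a..b} \<Longrightarrow> y t \<bullet> y' t \<le> K * (norm (y t))^2"
  shows "(norm (y b))^2 \<le> exp (2*K*(b-a)) * (norm (y a))^2"
proof -
  define \<phi> where "\<phi> t = exp (-(2*K*(t-a))) * (y t \<bullet> y t)" for t
  have yc: "continuous_on {a..b} y"
    unfolding continuous_on_eq_continuous_within using has_vector_derivative_continuous[OF d] by blast
  have "\<phi> b \<le> \<phi> a"
  proof (rule DERIV_nonpos_imp_decreasing_open[OF ab])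
    show "continuous_on {a..b} \<phi>" unfolding \<phi>_def by (intro continuous_intros yc)
    fix t assume t: "a < t" "t < b"
    have dy: "(y has_vector_derivative y' t) (at t)"
    proof -
      have "(y has_vector_derivative y' t) (at t within {a<..<b})"
        by (rule has_vector_derivative_within_subset[OF d[of t]]) (use t in auto)
      moreover have "at t within {a<..<b} = at t" by (rule at_within_open) (use t in auto)
      ultimately show ?thesis by simp
    qed
    then have dy': "(y has_derivative (\<lambda>h. h *\<^sub>R y' t)) (at t)" by (simp add: has_vector_derivative_def)
    have "((\<lambda>t. y t \<bullet> y t) has_derivative (\<lambda>h. y t \<bullet> (h *\<^sub>R y' t) + (h *\<^sub>R y' t) \<bullet> y t)) (at t)"
      by (rule has_derivative_inner[OF dy' dy'])
    then have i: "((\<lambda>t. y t \<bullet> y t) has_real_derivative 2 * (y t \<bullet> y' t)) (at t)"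
    proof -
      have "(\<lambda>h. y t \<bullet> (h *\<^sub>R y' t) + (h *\<^sub>R y' t) \<bullet> y t) = (*) (2 * (y t \<bullet> y' t))"
      proof
        fix h show "y t \<bullet> (h *\<^sub>R y' t) + (h *\<^sub>R y' t) \<bullet> y t = 2 * (y t \<bullet> y' t) * h"
          by (simp add: inner_commute[of "y' t"])
      qed
      with \<open>((\<lambda>t. y t \<bullet> y t) has_derivative _) _\<close> show ?thesis
        unfolding has_field_derivative_def by simp
    qed
    have e: "((\<lambda>t. exp (-(2*K*(t-a)))) has_real_derivative exp (-(2*K*(t-a))) * (-(2*K))) (at t)"
      by (auto intro!: derivative_eq_intros)
    have "(\<phi> has_real_derivative exp (-(2*K*(t-a))) * (-(2*K)) * (y t \<bullet> y t) + exp (-(2*K*(t-a))) * (2 * (y t \<bullet> y' t))) (at t)"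
      unfolding \<phi>_def using DERIV_mult'[OF e i] by (simp add: algebra_simps)
    moreover have "exp (-(2*K*(t-a))) * (-(2*K)) * (y t \<bullet> y t) + exp (-(2*K*(t-a))) * (2 * (y t \<bullet> y' t)) \<le> 0"
    proof -
      have "y t \<bullet> y' t \<le> K * (y t \<bullet> y t)" using le[of t] t by (simp add: power2_norm_eq_inner)
      then have "2 * (y t \<bullet> y' t) - 2*K * (y t \<bullet> y t) \<le> 0" by simp
      then have "exp (-(2*K*(t-a))) * (2 * (y t \<bullet> y' t) - 2*K * (y t \<bullet> y t)) \<le> 0"
        using mult_nonneg_nonpos[of "exp (-(2*K*(t-a)))"] by simp
      then show ?thesis by (simp add: algebra_simps)
    qed
    ultimately show "\<exists>D. (\<phi> has_real_derivative D) (at t) \<and> D \<le> 0" by blast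
  qed
  then have "exp (-(2*K*(b-a))) * (norm (y b))^2 \<le> (norm (y a))^2"
    by (simp add: \<phi>_def power2_norm_eq_inner)
  then have "exp (2*K*(b-a)) * (exp (-(2*K*(b-a))) * (norm (y b))^2) \<le> exp (2*K*(b-a)) * (norm (y a))^2"
    by (simp add: mult_left_mono)
  moreover have "exp (2*K*(b-a)) * (exp (-(2*K*(b-a))) * (norm (y b))^2) = (norm (y b))^2"
    by (simp add: mult.assoc[symmetric] exp_add[symmetric])
  ultimately show ?thesis by simp
qed


lemma ode_unique:
  fixes F :: "'a::real_inner \<Rightarrow> 'a"
  assumes ab: "a \<le> b"
    and z: "\<And>t. t\<in>{a..b} \<Longrightarrow> (z has_vector_derivative F (z t)) (at t within {a..b})"
    and w: "\<And>t. t\<in>{a..b} \<Longrightarrow> (w has_vector_derivative F (w t)) (at t within {a..b})"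
    and init: "z a = w a"
    and S: "\<And>t. t\<in>{a..b} \<Longrightarrow> z t \<in> S" "\<And>t. t\<in>{a..b} \<Longrightarrow> w t \<in> S"
    and lip: "L-lipschitz_on S F"
    and t: "t \<in> {a..b}"
  shows "z t = w t"
proof -
  have sub: "{a..t} \<subseteq> {a..b}" using t by auto
  have "(norm ((\<lambda>s. z s - w s) t))^2 \<le> exp (2*L*(t-a)) * (norm ((\<lambda>s. z s - w s) a))^2"
  proof (rule gronwall_sq[where y'="\<lambda>s. F (z s) - F (w s)"])
    show "a \<le> t" using t by auto
    fix s assume s: "s \<in> {a..t}"
    show "((\<lambda>s. z s - w s) has_vector_derivative F (z s) - F (w s)) (at s within {a..t})"
      using has_vector_derivative_within_subset[OF z[of s] sub] has_vector_derivative_within_subset[OF w[of s] sub] s sub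
      by (intro has_vector_derivative_diff) auto
    have "(z s - w s) \<bullet> (F (z s) - F (w s)) \<le> norm (z s - w s) * norm (F (z s) - F (w s))"
      by (rule norm_cauchy_schwarz)
    also have "\<dots> \<le> norm (z s - w s) * (L * norm (z s - w s))"
    proof (rule mult_left_mono)
      show "norm (F (z s) - F (w s)) \<le> L * norm (z s - w s)"
        using lipschitz_onD[OF lip, of "z s" "w s"] S[of s] s sub by (simp add: dist_norm)
    qed simp
    finally show "(z s - w s) \<bullet> (F (z s) - F (w s)) \<le> L * (norm (z s - w s))^2"
      by (simp add: power2_eq_square algebra_simps)
  qed
  then show ?thesis using init by simp
qed

lemma norm_vec_le_sum: "norm (x :: 'a::real_normed_vector^'n) \<le> (\<Sum>i\<in>UNIV. norm (x $ i))"
  unfolding norm_vec_def by (rule L2_set_le_sum) simp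

lemma finite_uniform:
  fixes P :: "'p::finite \<Rightarrow> bool" and Q :: "'p \<Rightarrow> real \<Rightarrow> bool"
  assumes ex: "\<And>p. P p \<Longrightarrow> \<exists>c. Q p c"
    and mono: "\<And>p c c'. Q p c \<Longrightarrow> c \<le> c' \<Longrightarrow> Q p c'"
  shows "\<exists>c\<ge>0. \<forall>p. P p \<longrightarrow> Q p c"
proof -
  have "\<forall>p. \<exists>c. P p \<longrightarrow> Q p c" using ex by blast
  then obtain f where f: "\<And>p. P p \<Longrightarrow> Q p (f p)" by metis
  define c where "c = (\<Sum>p\<in>UNIV. \<bar>f p\<bar>)"
  have "f p \<le> c" for p
  proof -
    have "\<bar>f p\<bar> \<le> c" unfolding c_def by (rule member_le_sum) auto
    then show ?thesis by simp
  qed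
  moreover have "c \<ge> 0" unfolding c_def by (simp add: sum_nonneg)
  ultimately show ?thesis using f mono by blast
qed

lemma lip_on_cball:
  fixes f :: "'a::euclidean_space \<Rightarrow> real"
  assumes loc: "\<And>z. \<exists>r>0. \<exists>L. L-lipschitz_on (cball z r) f"
  shows "\<exists>L. L-lipschitz_on (cball 0 R) f"
proof -
  have ll: "local_lipschitz {0::real} (cball 0 R) (\<lambda>_. f)"
  proof (rule local_lipschitzI)
    fix t x
    obtain r L where "r > 0" "L-lipschitz_on (cball x r) f" using loc by blast
    then show "\<exists>u>0. \<exists>L. \<forall>t\<in>cball t u \<inter> {0::real}. L-lipschitz_on (cball x u \<inter> cball 0 R) f"
      by (meson inf_le1 lipschitz_on_subset)
  qed
  obtain L where "\<And>t. t \<in> {0::real} \<Longrightarrow> L-lipschitz_on (cball 0 R) f"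
    using local_lipschitz_compact_implies_lipschitz[OF ll compact_cball compact_sing] by auto
  then show ?thesis by blast
qed

lemma loclip_cont:
  fixes f :: "'a::euclidean_space \<Rightarrow> real"
  assumes loc: "\<And>z. \<exists>r>0. \<exists>L. L-lipschitz_on (cball z r) f"
  shows "continuous_on UNIV f"
proof (rule continuous_at_imp_continuous_on, intro ballI)
  fix z :: 'a
  obtain r L where "r > 0" "L-lipschitz_on (cball z r) f" using loc by blast
  then have "continuous_on (cball z r) f" using lipschitz_on_continuous_on by blast
  then show "isCont f z"
    by (rule continuous_on_interior) (use \<open>r > 0\<close> in simp)
qed

lemma Qmat_rowsum: "(\<Sum>j\<in>UNIV. Qmat Psi z i j) = 0"
proof -
  have "(\<Sum>j\<in>UNIV. Qmat Psi z i j) = Qmat Psi z i i + (\<Sum>j\<in>UNIV-{i}. Qmat Psi z i j)"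
    by (simp add: sum.remove)
  also have "(\<Sum>j\<in>UNIV-{i}. Qmat Psi z i j) = (\<Sum>j\<in>UNIV-{i}. Psi i j z)"
    by (rule sum.cong) (auto simp: Qmat_def)
  finally show ?thesis by (simp add: Qmat_def)
qed

lemma Qmat_bound:
  fixes Psi :: "'n::finite \<Rightarrow> 'n \<Rightarrow> ('d::finite,'n) config \<Rightarrow> real"
  assumes B0: "B \<ge> 0" and B: "\<And>i j z. i \<noteq> j \<Longrightarrow> \<bar>Psi i j z\<bar> \<le> B"
  shows "\<bar>Qmat Psi z i j\<bar> \<le> real CARD('n) * B"
proof (cases "i = j")
  case True
  have "\<bar>Qmat Psi z i j\<bar> = \<bar>\<Sum>k\<in>UNIV-{i}. Psi i k z\<bar>" using True by (simp add: Qmat_def)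
  also have "\<dots> \<le> (\<Sum>k\<in>UNIV-{i}. \<bar>Psi i k z\<bar>)" by (rule sum_abs)
  also have "\<dots> \<le> (\<Sum>k\<in>UNIV-{i}. B)" by (rule sum_mono) (use B in auto)
  also have "\<dots> = real (CARD('n) - 1) * B" by (simp add: card_Diff_singleton)
  also have "\<dots> \<le> real CARD('n) * B"
    using B0 by (intro mult_right_mono) auto
  finally show ?thesis .
next
  case False
  then have "\<bar>Qmat Psi z i j\<bar> \<le> B" using B by (simp add: Qmat_def)
  moreover note B0
  moreover have "real CARD('n) \<ge> 1" by simp
  ultimately show ?thesis by (smt (verit) mult_le_cancel_right1)
qed

lemma vn: "norm (snd (z $ j)) \<le> norm z"
proof -
  have "norm (snd (z$j)) \<le> norm (z$j)" using norm_snd_le[of "snd (z$j)" "fst (z$j)"] by simp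
  then show ?thesis by (rule order_trans) (rule Finite_Cartesian_Product.norm_nth_le)
qed

lemma rhs_growth:
  fixes Psi :: "'n::finite \<Rightarrow> 'n \<Rightarrow> ('d::finite,'n) config \<Rightarrow> real"
  assumes QB: "\<And>z i j. \<bar>Qmat Psi z i j\<bar> \<le> Q0"
  shows "norm (rhs \<alpha> Psi z) \<le> real CARD('n) * (1 + \<bar>\<alpha>\<bar> * real CARD('n) * Q0 * 2) * norm z"
proof -
  have comp: "norm (rhs \<alpha> Psi z $ i) \<le> (1 + \<bar>\<alpha>\<bar> * real CARD('n) * Q0 * 2) * norm z" for i
  proof -
    have t: "norm (Qmat Psi z i j *\<^sub>R (snd (z$j) - snd (z$i))) \<le> Q0 * (2 * norm z)" for j
    proof -
      have "norm (Qmat Psi z i j *\<^sub>R (snd (z$j) - snd (z$i))) = \<bar>Qmat Psi z i j\<bar> * norm (snd (z$j) - snd (z$i))" by simp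
      also have "\<dots> \<le> Q0 * (2 * norm z)"
      proof (rule mult_mono[OF QB])
        show "norm (snd (z$j) - snd (z$i)) \<le> 2 * norm z"
          using norm_triangle_ineq4[of "snd (z$j)" "snd (z$i)"] vn[of z i] vn[of z j] by auto
        show "0 \<le> Q0" using QB[of z i j] by auto
      qed simp
      finally show ?thesis .
    qed
    have "norm (rhs \<alpha> Psi z $ i) \<le> norm (snd (z$i)) + norm (\<alpha> *\<^sub>R (\<Sum>j\<in>UNIV. Qmat Psi z i j *\<^sub>R (snd (z $ j) - snd (z $ i))))"
      unfolding rhs_def vec_lambda_beta by (rule norm_Pair_le)
    also have "\<dots> \<le> norm z + \<bar>\<alpha>\<bar> * (\<Sum>j\<in>(UNIV::'n set). Q0 * (2*norm z))"
    proof (rule add_mono[OF vn])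
      have "norm (\<Sum>j\<in>UNIV. Qmat Psi z i j *\<^sub>R (snd (z $ j) - snd (z $ i))) \<le> (\<Sum>j\<in>(UNIV::'n set). Q0 * (2*norm z))"
        by (rule order_trans[OF norm_sum], rule sum_mono, rule t)
      then show "norm (\<alpha> *\<^sub>R (\<Sum>j\<in>UNIV. Qmat Psi z i j *\<^sub>R (snd (z $ j) - snd (z $ i)))) \<le> \<bar>\<alpha>\<bar> * (\<Sum>j\<in>(UNIV::'n set). Q0 * (2*norm z))"
        by (simp add: mult_left_mono)
    qed
    also have "\<dots> = (1 + \<bar>\<alpha>\<bar> * real CARD('n) * Q0 * 2) * norm z" by (simp add: algebra_simps)
    finally show ?thesis .
  qed
  have "norm (rhs \<alpha> Psi z) \<le> (\<Sum>i\<in>UNIV. norm (rhs \<alpha> Psi z $ i))" by (rule norm_vec_le_sum)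
  also have "\<dots> \<le> (\<Sum>i\<in>(UNIV::'n set). (1 + \<bar>\<alpha>\<bar> * real CARD('n) * Q0 * 2) * norm z)" by (rule sum_mono[OF comp])
  also have "\<dots> = real CARD('n) * (1 + \<bar>\<alpha>\<bar> * real CARD('n) * Q0 * 2) * norm z" by simp
  finally show ?thesis .
qed

lemma rhs_lip:
  fixes Psi :: "'n::finite \<Rightarrow> 'n \<Rightarrow> ('d::finite,'n) config \<Rightarrow> real"
  assumes QB: "\<And>z i j. \<bar>Qmat Psi z i j\<bar> \<le> Q0"
    and QL: "\<And>z w i j. z \<in> S \<Longrightarrow> w \<in> S \<Longrightarrow> \<bar>Qmat Psi z i j - Qmat Psi w i j\<bar> \<le> LQ * norm (z - w)"
    and SR: "\<And>z. z \<in> S \<Longrightarrow> norm z \<le> R"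
    and LQ: "LQ \<ge> 0" and R: "R \<ge> 0"
  shows "(real CARD('n) * (1 + \<bar>\<alpha>\<bar> * real CARD('n) * (LQ * (2*R) + Q0 * 2)))-lipschitz_on S (rhs \<alpha> Psi)"
proof (rule lipschitz_onI)
  have Q0: "Q0 \<ge> 0" using QB[of undefined undefined undefined] by auto
  show "0 \<le> real CARD('n) * (1 + \<bar>\<alpha>\<bar> * real CARD('n) * (LQ * (2*R) + Q0 * 2))"
    using Q0 LQ R by (intro mult_nonneg_nonneg add_nonneg_nonneg) auto
  fix z w assume z: "z \<in> S" and w: "w \<in> S"
  define K1 where "K1 = 1 + \<bar>\<alpha>\<bar> * real CARD('n) * (LQ * (2*R) + Q0 * 2)"
  have comp: "norm ((rhs \<alpha> Psi z - rhs \<alpha> Psi w) $ i) \<le> K1 * norm (z - w)" for i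
  proof -
    define u :: "('d,'n) config \<Rightarrow> 'n \<Rightarrow> real^'d" where "u x j = snd (x$j) - snd (x$i)" for x j
    have t: "norm (Qmat Psi z i j *\<^sub>R u z j - Qmat Psi w i j *\<^sub>R u w j) \<le> LQ * (2*R) * norm (z - w) + Q0 * 2 * norm (z - w)" for j
    proof -
      have e: "Qmat Psi z i j *\<^sub>R u z j - Qmat Psi w i j *\<^sub>R u w j
          = (Qmat Psi z i j - Qmat Psi w i j) *\<^sub>R u z j + Qmat Psi w i j *\<^sub>R (u z j - u w j)"
        by (simp add: algebra_simps)
      have uz: "norm (u z j) \<le> 2 * R"
        using norm_triangle_ineq4[of "snd (z$j)" "snd (z$i)"] vn[of z i] vn[of z j] SR[OF z] by (auto simp: u_def)
      have uzw: "norm (u z j - u w j) \<le> 2 * norm (z - w)"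
      proof -
        have "u z j - u w j = snd ((z - w)$j) - snd ((z-w)$i)" by (simp add: u_def)
        then show ?thesis
          using norm_triangle_ineq4[of "snd ((z - w)$j)" "snd ((z-w)$i)"] vn[of "z - w" i] vn[of "z - w" j] by auto
      qed
      have "norm (Qmat Psi z i j *\<^sub>R u z j - Qmat Psi w i j *\<^sub>R u w j)
          \<le> \<bar>Qmat Psi z i j - Qmat Psi w i j\<bar> * norm (u z j) + \<bar>Qmat Psi w i j\<bar> * norm (u z j - u w j)"
        unfolding e using norm_triangle_ineq[of "(Qmat Psi z i j - Qmat Psi w i j) *\<^sub>R u z j" "Qmat Psi w i j *\<^sub>R (u z j - u w j)"]
        by simp
      also have "\<dots> \<le> (LQ * norm (z - w)) * (2 * R) + Q0 * (2 * norm (z - w))"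
        by (intro add_mono mult_mono QL[OF z w] QB uz uzw) (use LQ Q0 in auto)
      finally show ?thesis by (simp add: algebra_simps)
    qed
    have "(rhs \<alpha> Psi z - rhs \<alpha> Psi w) $ i = (snd (z$i) - snd (w$i),
        \<alpha> *\<^sub>R (\<Sum>j\<in>UNIV. Qmat Psi z i j *\<^sub>R u z j - Qmat Psi w i j *\<^sub>R u w j))"
      by (simp add: rhs_def u_def scaleR_diff_right sum_subtractf)
    note eq = this
    have "norm ((rhs \<alpha> Psi z - rhs \<alpha> Psi w) $ i) \<le> norm (snd (z$i) - snd (w$i))
        + norm (\<alpha> *\<^sub>R (\<Sum>j\<in>UNIV. Qmat Psi z i j *\<^sub>R u z j - Qmat Psi w i j *\<^sub>R u w j))"
      by (subst eq) (rule norm_Pair_le)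
    also have "\<dots> \<le> norm (z - w) + \<bar>\<alpha>\<bar> * (\<Sum>j\<in>(UNIV::'n set). LQ * (2*R) * norm (z - w) + Q0 * 2 * norm (z - w))"
    proof (rule add_mono)
      show "norm (snd (z$i) - snd (w$i)) \<le> norm (z - w)" using vn[of "z - w" i] by simp
      have "norm (\<Sum>j\<in>UNIV. Qmat Psi z i j *\<^sub>R u z j - Qmat Psi w i j *\<^sub>R u w j) \<le> (\<Sum>j\<in>(UNIV::'n set). LQ * (2*R) * norm (z - w) + Q0 * 2 * norm (z - w))"
        by (rule order_trans[OF norm_sum], rule sum_mono, rule t)
      then show "norm (\<alpha> *\<^sub>R (\<Sum>j\<in>UNIV. Qmat Psi z i j *\<^sub>R u z j - Qmat Psi w i j *\<^sub>R u w j)) \<le> \<bar>\<alpha>\<bar> * (\<Sum>j\<in>(UNIV::'n set). LQ * (2*R) * norm (z - w) + Q0 * 2 * norm (z - w))"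
        by (simp add: mult_left_mono)
    qed
    also have "\<dots> = K1 * norm (z - w)" by (simp add: K1_def algebra_simps)
    finally show ?thesis .
  qed
  have "dist (rhs \<alpha> Psi z) (rhs \<alpha> Psi w) \<le> (\<Sum>i\<in>UNIV. norm ((rhs \<alpha> Psi z - rhs \<alpha> Psi w) $ i))"
    unfolding dist_norm by (rule norm_vec_le_sum)
  also have "\<dots> \<le> (\<Sum>i\<in>(UNIV::'n set). K1 * norm (z - w))" by (rule sum_mono[OF comp])
  also have "\<dots> = real CARD('n) * K1 * dist z w" by (simp add: dist_norm)
  finally show "dist (rhs \<alpha> Psi z) (rhs \<alpha> Psi w) \<le> real CARD('n) * (1 + \<bar>\<alpha>\<bar> * real CARD('n) * (LQ * (2*R) + Q0 * 2)) * dist z w"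
    by (simp add: K1_def)
qed

lemma deriv_cont:
  assumes "\<And>t. t\<in>S \<Longrightarrow> (z has_vector_derivative z' t) (at t within S)"
  shows "continuous_on S z"
  unfolding continuous_on_eq_continuous_within using has_vector_derivative_continuous[OF assms] by blast

lemma sol_unique:
  fixes Psi :: "'n::finite \<Rightarrow> 'n \<Rightarrow> ('d::finite,'n) config \<Rightarrow> real"
  assumes lipR: "\<And>R. \<exists>L. L-lipschitz_on (cball 0 R) (rhs \<alpha> Psi)"
    and z: "\<And>t. t\<in>{0..b} \<Longrightarrow> (z has_vector_derivative rhs \<alpha> Psi (z t)) (at t within {0..b})"
    and w: "\<And>t. t\<in>{0..b} \<Longrightarrow> (w has_vector_derivative rhs \<alpha> Psi (w t)) (at t within {0..b})"
    and init: "z 0 = w 0" and t: "t \<in> {0..b}"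
  shows "z t = w t"
proof -
  have b: "0 \<le> b" using t by auto
  have "bounded (z ` {0..b} \<union> w ` {0..b})"
    using compact_continuous_image[OF deriv_cont[OF z] compact_Icc]
      compact_continuous_image[OF deriv_cont[OF w] compact_Icc]
    by (intro bounded_Un[THEN iffD2] conjI compact_imp_bounded)
  then obtain R where R: "\<And>x. x \<in> z ` {0..b} \<union> w ` {0..b} \<Longrightarrow> norm x \<le> R"
    unfolding bounded_pos by blast
  obtain L where L: "L-lipschitz_on (cball 0 R) (rhs \<alpha> Psi)" using lipR by blast
  show ?thesis
    by (rule ode_unique[OF b z w init _ _ L t]) (use R in auto)
qed

lemma ode_step:
  fixes Psi :: "'n::finite \<Rightarrow> 'n \<Rightarrow> ('d::finite,'n) config \<Rightarrow> real"
  assumes QB: "\<And>z i j. \<bar>Qmat Psi z i j\<bar> \<le> Q0"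
    and lipR: "\<And>R. \<exists>L. L-lipschitz_on (cball 0 R) (rhs \<alpha> Psi)"
    and b: "0 \<le> b"
  shows "\<exists>x. x 0 = z0 \<and> (\<forall>t\<in>{0..b}. (x has_vector_derivative rhs \<alpha> Psi (x t)) (at t within {0..b}))"
proof -
  define Cg where "Cg = real CARD('n) * (1 + \<bar>\<alpha>\<bar> * real CARD('n) * Q0 * 2)"
  have Q0: "Q0 \<ge> 0" using QB[of undefined undefined undefined] by auto
  have Cg0: "Cg \<ge> 0" unfolding Cg_def using Q0 by (intro mult_nonneg_nonneg add_nonneg_nonneg) auto
  have growth: "\<And>z. norm (rhs \<alpha> Psi z) \<le> Cg * norm z"
    unfolding Cg_def by (rule rhs_growth[OF QB])
  define R where "R = norm z0 * exp (Cg * b) + 1"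
  have R: "R > 0" unfolding R_def by (simp add: add_nonneg_pos)
  obtain L where L: "L-lipschitz_on (cball 0 R) (rhs \<alpha> Psi)" using lipR by blast
  have L0: "L \<ge> 0" using L lipschitz_on_nonneg by blast
  define \<rho> where "\<rho> = closest_point (cball (0::('d,'n) config) R)"
  have ne: "cball (0::('d,'n) config) R \<noteq> {}" using R by auto
  have \<rho>in: "\<rho> x \<in> cball 0 R" for x
    unfolding \<rho>_def by (rule closest_point_in_set[OF closed_cball ne])
  have \<rho>lip: "dist (\<rho> x) (\<rho> y) \<le> dist x y" for x y
    unfolding \<rho>_def by (rule closest_point_lipschitz[OF convex_cball closed_cball ne])
  have \<rho>self: "x \<in> cball 0 R \<Longrightarrow> \<rho> x = x" for x
    unfolding \<rho>_def by (rule closest_point_self)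
  have \<rho>0: "norm (\<rho> x) \<le> norm x" for x
  proof -
    have "\<rho> 0 = 0" using R by (intro \<rho>self) auto
    then show ?thesis using \<rho>lip[of x 0] by (simp add: dist_norm)
  qed
  define F where "F x = rhs \<alpha> Psi (\<rho> x)" for x
  have Flip: "norm (F x - F y) \<le> L * norm (x - y)" for x y
  proof -
    have "dist (F x) (F y) \<le> L * dist (\<rho> x) (\<rho> y)"
      unfolding F_def by (rule lipschitz_onD[OF L \<rho>in \<rho>in])
    also have "\<dots> \<le> L * dist x y" by (rule mult_left_mono[OF \<rho>lip L0])
    finally show ?thesis by (simp add: dist_norm)
  qed
  have "\<exists>x. x 0 = z0 \<and> (\<forall>t\<in>{0..b}. (x has_vector_derivative F (x t)) (at t within {0..b}) \<and> x t \<in> UNIV)"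
    by (rule picard[OF b L0 Flip continuous_on_const closed_UNIV UNIV_I]) auto
  then obtain x where x0: "x 0 = z0" and xd: "\<And>t. t\<in>{0..b} \<Longrightarrow> (x has_vector_derivative F (x t)) (at t within {0..b})"
    by blast
  have bnd: "norm (x t) < R" if t: "t \<in> {0..b}" for t
  proof -
    have sub: "{0..t} \<subseteq> {0..b}" using t by auto
    have "(norm (x t))^2 \<le> exp (2*Cg*(t-0)) * (norm (x 0))^2"
    proof (rule gronwall_sq[where y'="\<lambda>s. F (x s)"])
      show "0 \<le> t" using t by auto
      fix s assume s: "s \<in> {0..t}"
      show "(x has_vector_derivative F (x s)) (at s within {0..t})"
        by (rule has_vector_derivative_within_subset[OF xd sub]) (use s sub in auto)
      have "x s \<bullet> F (x s) \<le> norm (x s) * norm (F (x s))" by (rule norm_cauchy_schwarz)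
      also have "\<dots> \<le> norm (x s) * (Cg * norm (x s))"
      proof (rule mult_left_mono)
        show "norm (F (x s)) \<le> Cg * norm (x s)"
          unfolding F_def by (rule order_trans[OF growth mult_left_mono[OF \<rho>0 Cg0]])
      qed simp
      finally show "x s \<bullet> F (x s) \<le> Cg * (norm (x s))^2" by (simp add: power2_eq_square algebra_simps)
    qed
    also have "\<dots> = (exp (Cg * t) * norm z0)^2"
      using x0 by (simp add: power_mult_distrib exp_double[symmetric] algebra_simps)
    finally have "norm (x t) \<le> exp (Cg * t) * norm z0"
      by (rule power2_le_imp_le) simp
    also have "\<dots> \<le> exp (Cg * b) * norm z0"
      using t Cg0 by (intro mult_right_mono) (auto intro: mult_left_mono)
    finally show ?thesis unfolding R_def by (simp add: mult.commute)
  qed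
  show ?thesis
  proof (intro exI conjI ballI)
    show "x 0 = z0" by (rule x0)
    fix t assume t: "t \<in> {0..b}"
    have "F (x t) = rhs \<alpha> Psi (x t)" unfolding F_def using bnd[OF t] by (simp add: \<rho>self)
    then show "(x has_vector_derivative rhs \<alpha> Psi (x t)) (at t within {0..b})" using xd[OF t] by simp
  qed
qed

lemma ode_global:
  fixes Psi :: "'n::finite \<Rightarrow> 'n \<Rightarrow> ('d::finite,'n) config \<Rightarrow> real"
  assumes QB: "\<And>z i j. \<bar>Qmat Psi z i j\<bar> \<le> Q0"
    and lipR: "\<And>R. \<exists>L. L-lipschitz_on (cball 0 R) (rhs \<alpha> Psi)"
  shows "\<exists>z. is_solution \<alpha> Psi z0 z \<and> (\<forall>w. is_solution \<alpha> Psi z0 w \<longrightarrow> (\<forall>t\<ge>0. w t = z t))"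
proof -
  have "\<forall>n::nat. \<exists>x. x 0 = z0 \<and> (\<forall>t\<in>{0..real n}. (x has_vector_derivative rhs \<alpha> Psi (x t)) (at t within {0..real n}))"
    using ode_step[OF QB lipR] by simp
  then obtain zs where zs0: "\<And>n. zs n 0 = z0"
    and zsd: "\<And>n t. t\<in>{0..real n} \<Longrightarrow> (zs n has_vector_derivative rhs \<alpha> Psi (zs n t)) (at t within {0..real n})"
    by metis
  have agree: "zs n t = zs m t" if t: "t \<in> {0..min (real n) (real m)}" for n m t
  proof (rule sol_unique[OF lipR _ _ _ t])
    fix s assume s: "s \<in> {0..min (real n) (real m)}"
    show "(zs n has_vector_derivative rhs \<alpha> Psi (zs n s)) (at s within {0..min (real n) (real m)})"
      by (rule has_vector_derivative_within_subset[OF zsd]) (use s in auto)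
    show "(zs m has_vector_derivative rhs \<alpha> Psi (zs m s)) (at s within {0..min (real n) (real m)})"
      by (rule has_vector_derivative_within_subset[OF zsd]) (use s in auto)
  qed (simp add: zs0)
  define N where "N t = Suc (nat \<lceil>t\<rceil>)" for t :: real
  have N: "t < real (N t)" for t
  proof -
    have "t \<le> real (nat \<lceil>t\<rceil>)" by (rule real_nat_ceiling_ge)
    then show ?thesis by (simp add: N_def)
  qed
  define Z where "Z t = zs (N t) t" for t
  have Zeq: "Z s = zs n s" if s: "s \<in> {0..real n}" for n s
    unfolding Z_def using N[of s] s by (intro agree) auto
  have Zd: "(Z has_vector_derivative rhs \<alpha> Psi (Z t)) (at t within {0..})" if t: "t \<ge> 0" for t
  proof -
    define n where "n = N t"
    have tn: "t < real n" using N n_def by simp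
    have d1: "(zs n has_vector_derivative rhs \<alpha> Psi (zs n t)) (at t within {0..real n})"
      by (rule zsd) (use t tn in auto)
    have "at t within {0..real n} = at t within {0..}"
      by (rule at_within_nhd[of t "{..<real n}"]) (use tn in auto)
    with d1 have d2: "(zs n has_vector_derivative rhs \<alpha> Psi (zs n t)) (at t within {0..})" by simp
    have "(Z has_vector_derivative rhs \<alpha> Psi (zs n t)) (at t within {0..})"
    proof (rule has_vector_derivative_transform_within[OF d2, of "real n - t"])
      show "0 < real n - t" using tn by simp
      show "t \<in> {0..}" using t by simp
      fix x' assume "x' \<in> {0..}" "dist x' t < real n - t"
      then have "x' \<in> {0..real n}" by (auto simp: dist_real_def)
      then show "zs n x' = Z x'" by (rule Zeq[symmetric])
    qed
    moreover have "zs n t = Z t" by (rule Zeq[symmetric]) (use t tn in auto)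
    ultimately show ?thesis by simp
  qed
  have Z0: "Z 0 = z0" using Zeq[of 0 0] zs0 by simp
  show ?thesis
  proof (intro exI conjI allI impI)
    show "is_solution \<alpha> Psi z0 Z" unfolding is_solution_def using Z0 Zd by blast
    fix w and t :: real assume w: "is_solution \<alpha> Psi z0 w" and t: "0 \<le> t"
    show "w t = Z t"
    proof (rule sol_unique[OF lipR])
      fix s assume s: "s \<in> {0..t}"
      show "(w has_vector_derivative rhs \<alpha> Psi (w s)) (at s within {0..t})"
      proof (rule has_vector_derivative_within_subset)
        show "(w has_vector_derivative rhs \<alpha> Psi (w s)) (at s within {0..})"
          using w s unfolding is_solution_def by auto
      qed auto
      show "(Z has_vector_derivative rhs \<alpha> Psi (Z s)) (at s within {0..t})"
        by (rule has_vector_derivative_within_subset[OF Zd[of s]]) (use s in auto)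
    next
      show "w 0 = Z 0" using w Z0 by (simp add: is_solution_def)
      show "t \<in> {0..t}" using t by simp
    qed
  qed
qed

lemma bl_vector_deriv:
  assumes bl: "bounded_linear f" and d: "(g has_vector_derivative v) F"
  shows "((\<lambda>x. f (g x)) has_vector_derivative f v) F"
proof -
  have "((\<lambda>x. f (g x)) has_derivative (\<lambda>h. f (h *\<^sub>R v))) F"
    using bounded_linear.has_derivative[OF bl d[unfolded has_vector_derivative_def]] .
  then show ?thesis
    unfolding has_vector_derivative_def by (simp add: linear_scale[OF bounded_linear.linear[OF bl]])
qed

lemma deriv_zero_const:
  fixes g :: "real \<Rightarrow> real"
  assumes ab: "a \<le> b" and d: "\<And>x. x \<in> {a..b} \<Longrightarrow> (g has_real_derivative 0) (at x within {a..b})"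
  shows "g b = g a"
proof -
  have "\<exists>c. \<forall>x\<in>{a..b}. g x = c"
  proof (rule has_derivative_zero_constant[OF convex_closed_interval(1)])
    fix x assume x: "x \<in> {a..b}"
    show "(g has_derivative (\<lambda>h. 0)) (at x within {a..b})"
    proof -
      have e: "((*) (0::real)) = (\<lambda>h. 0)" by auto
      show ?thesis using d[OF x] by (simp add: has_field_derivative_def e)
    qed
  qed
  then show ?thesis using ab by auto
qed

lemma markov_rowsum:
  fixes G :: "real \<Rightarrow> 'n::finite \<Rightarrow> 'n \<Rightarrow> real"
  assumes mk: "markov_transition T G P"
    and rs: "\<And>u k. u \<in> {0..T} \<Longrightarrow> (\<Sum>l\<in>UNIV. G u k l) = 0"
    and s: "s \<in> {0..T}" and r: "r \<in> {s..T}"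
  shows "(\<Sum>j\<in>UNIV. P s r i j) = 1"
proof -
  have "(\<lambda>r. \<Sum>j\<in>UNIV. P s r i j) r = (\<lambda>r. \<Sum>j\<in>UNIV. P s r i j) s"
  proof (rule deriv_zero_const[where g="\<lambda>r. \<Sum>j\<in>UNIV. P s r i j"])
    show "s \<le> r" using r by auto
    fix u assume u: "u \<in> {s..r}"
    have "((\<lambda>r. \<Sum>j\<in>UNIV. P s r i j) has_real_derivative (\<Sum>j\<in>UNIV. \<Sum>k\<in>UNIV. P s u i k * G u k j)) (at u within {s..r})"
    proof (rule DERIV_sum)
      fix j
      have "((\<lambda>r. P s r i j) has_real_derivative (\<Sum>k\<in>UNIV. P s u i k * G u k j)) (at u within {s..T})"
        using mk s u r unfolding markov_transition_def by auto
      then show "((\<lambda>r. P s r i j) has_real_derivative (\<Sum>k\<in>UNIV. P s u i k * G u k j)) (at u within {s..r})"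
        by (rule DERIV_subset) (use r in auto)
    qed
    moreover have "(\<Sum>j\<in>UNIV. \<Sum>k\<in>UNIV. P s u i k * G u k j) = 0"
    proof -
      have "(\<Sum>j\<in>UNIV. \<Sum>k\<in>UNIV. P s u i k * G u k j) = (\<Sum>k\<in>UNIV. P s u i k * (\<Sum>j\<in>UNIV. G u k j))"
        by (subst sum.swap) (simp add: sum_distrib_left)
      also have "\<dots> = 0" using rs[of u] s u r by simp
      finally show ?thesis .
    qed
    ultimately show "((\<lambda>r. \<Sum>j\<in>UNIV. P s r i j) has_real_derivative 0) (at u within {s..r})" by simp
  qed
  moreover have "(\<Sum>j\<in>UNIV. P s s i j) = 1"
    using mk s unfolding markov_transition_def by simp
  ultimately show ?thesis by simp
qed

lemma rhs_comp:
  "snd (rhs \<alpha> Psi z $ j) $ m = (\<Sum>l\<in>UNIV. \<alpha> * Qmat Psi z j l * snd (z $ l) $ m)"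
proof -
  have "snd (rhs \<alpha> Psi z $ j) $ m = \<alpha> * (\<Sum>l\<in>UNIV. Qmat Psi z j l * (snd (z $ l) $ m - snd (z $ j) $ m))"
    by (simp add: rhs_def)
  also have "\<dots> = \<alpha> * ((\<Sum>l\<in>UNIV. Qmat Psi z j l * snd (z $ l) $ m) - (\<Sum>l\<in>UNIV. Qmat Psi z j l * snd (z $ j) $ m))"
    by (simp add: right_diff_distrib sum_subtractf)
  also have "(\<Sum>l\<in>UNIV. Qmat Psi z j l * snd (z $ j) $ m) = 0"
    by (simp add: sum_distrib_right[symmetric] Qmat_rowsum)
  also have "\<alpha> * ((\<Sum>l\<in>UNIV. Qmat Psi z j l * snd (z $ l) $ m) - 0) = (\<Sum>l\<in>UNIV. \<alpha> * Qmat Psi z j l * snd (z $ l) $ m)"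
    by (simp add: sum_distrib_left mult.assoc)
  finally show ?thesis .
qed

lemma markov_repr:
  fixes Psi :: "'n::finite \<Rightarrow> 'n \<Rightarrow> ('d::finite,'n) config \<Rightarrow> real" and Z :: "real \<Rightarrow> ('d,'n) config"
  assumes Zd: "\<And>t. t \<ge> 0 \<Longrightarrow> (Z has_vector_derivative rhs \<alpha> Psi (Z t)) (at t within {0..})"
    and mk: "markov_transition T (\<lambda>u k l. \<alpha> * Qmat Psi (Z (T - u)) k l) P"
    and ab: "0 \<le> a" "a \<le> b" "b \<le> T"
  shows "snd (Z (T-a) $ i) $ m = (\<Sum>j\<in>UNIV. P a b i j * snd (Z (T-b) $ j) $ m)"
proof -
  define G where "G u k l = \<alpha> * Qmat Psi (Z (T - u)) k l" for u k l
  define V where "V j r = snd (Z (T - r) $ j) $ m" for j r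
  have dV: "((\<lambda>r. V j r) has_real_derivative -(\<Sum>l\<in>UNIV. G r j l * V l r)) (at r within {a..b})"
    if r: "r \<in> {a..b}" for j r
  proof -
    have "((\<lambda>r. T - r) has_real_derivative -1) (at r within {a..b})"
      by (auto intro!: derivative_eq_intros)
    then have d1: "((\<lambda>r. T - r) has_vector_derivative -1) (at r within {a..b})"
      by (simp add: has_real_derivative_iff_has_vector_derivative)
    have d2: "(Z has_vector_derivative rhs \<alpha> Psi (Z (T - r))) (at (T - r) within (\<lambda>r. T - r) ` {a..b})"
      by (rule has_vector_derivative_within_subset[OF Zd]) (use r ab in auto)
    have "((Z \<circ> (\<lambda>r. T - r)) has_vector_derivative (-1) *\<^sub>R rhs \<alpha> Psi (Z (T - r))) (at r within {a..b})"
      by (rule vector_diff_chain_within[OF d1]) (use d2 in simp)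
    then have d3: "((\<lambda>r. Z (T - r)) has_vector_derivative - rhs \<alpha> Psi (Z (T - r))) (at r within {a..b})"
      by (simp add: o_def)
    have bl: "bounded_linear (\<lambda>z::('d,'n) config. snd (z $ j) $ m)"
      by (rule bounded_linear_compose[OF bounded_linear_vec_nth bounded_linear_compose[OF bounded_linear_snd bounded_linear_vec_nth]])
    have "((\<lambda>r. snd (Z (T - r) $ j) $ m) has_vector_derivative snd ((- rhs \<alpha> Psi (Z (T - r))) $ j) $ m) (at r within {a..b})"
      by (rule bl_vector_deriv[OF bl d3])
    moreover have "snd ((- rhs \<alpha> Psi (Z (T - r))) $ j) $ m = -(\<Sum>l\<in>UNIV. G r j l * V l r)"
      by (simp add: rhs_comp G_def V_def)
    ultimately show ?thesis by (simp add: has_real_derivative_iff_has_vector_derivative V_def)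
  qed
  have dP: "((\<lambda>r. P a r i j) has_real_derivative (\<Sum>k\<in>UNIV. P a r i k * G r k j)) (at r within {a..b})"
    if r: "r \<in> {a..b}" for i j r
  proof -
    have "((\<lambda>r. P a r i j) has_real_derivative (\<Sum>k\<in>UNIV. P a r i k * G r k j)) (at r within {a..T})"
      using mk ab r unfolding markov_transition_def G_def by auto
    then show ?thesis by (rule DERIV_subset) (use ab in auto)
  qed
  define g where "g r = (\<Sum>j\<in>UNIV. P a r i j * V j r)" for r
  have "g b = g a"
  proof (rule deriv_zero_const[OF ab(2)])
    fix r assume r: "r \<in> {a..b}"
    have "(g has_real_derivative (\<Sum>j\<in>UNIV. P a r i j * -(\<Sum>l\<in>UNIV. G r j l * V l r) + (\<Sum>k\<in>UNIV. P a r i k * G r k j) * V j r)) (at r within {a..b})"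
      unfolding g_def by (rule DERIV_sum) (rule DERIV_mult'[OF dP[OF r] dV[OF r]])
    moreover have "(\<Sum>j\<in>UNIV. P a r i j * -(\<Sum>l\<in>UNIV. G r j l * V l r) + (\<Sum>k\<in>UNIV. P a r i k * G r k j) * V j r) = 0"
    proof -
      have "(\<Sum>j\<in>UNIV. (\<Sum>k\<in>UNIV. P a r i k * G r k j) * V j r) = (\<Sum>j\<in>UNIV. \<Sum>k\<in>UNIV. P a r i k * G r k j * V j r)"
        by (simp add: sum_distrib_right)
      also have "\<dots> = (\<Sum>k\<in>UNIV. \<Sum>j\<in>UNIV. P a r i k * G r k j * V j r)"
        by (rule sum.swap)
      also have "\<dots> = (\<Sum>k\<in>UNIV. P a r i k * (\<Sum>j\<in>UNIV. G r k j * V j r))"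
        by (simp add: sum_distrib_left mult.assoc)
      finally have e: "(\<Sum>j\<in>UNIV. (\<Sum>k\<in>UNIV. P a r i k * G r k j) * V j r) = (\<Sum>k\<in>UNIV. P a r i k * (\<Sum>j\<in>UNIV. G r k j * V j r))" .
      show ?thesis by (simp add: sum_subtractf e)
    qed
    ultimately show "(g has_real_derivative 0) (at r within {a..b})" by simp
  qed
  moreover have "g a = V i a"
  proof -
    have pid: "\<And>j. P a a i j = (if i = j then 1 else 0)" using mk ab unfolding markov_transition_def by auto
    have "g a = (\<Sum>j\<in>UNIV. if i = j then V j a else 0)" unfolding g_def by (rule sum.cong) (simp_all add: pid)
    then show ?thesis by simp
  qed
  ultimately show ?thesis by (simp add: g_def V_def)
qed

lemma bl_nth2: "bounded_linear (\<lambda>X::real^'n^'m. X $ i $ j)"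
  by (rule bounded_linear_compose[OF bounded_linear_vec_nth bounded_linear_vec_nth])

lemma abs_nth2_le: "\<bar>X $ i $ k\<bar> \<le> norm (X::real^'n^'m)"
  by (rule order_trans[OF component_le_norm_cart Finite_Cartesian_Product.norm_nth_le])

lemma markov_exists:
  fixes G :: "real \<Rightarrow> 'n::finite \<Rightarrow> 'n \<Rightarrow> real"
  assumes T: "0 \<le> T"
    and cont: "\<And>k l. continuous_on {0..T} (\<lambda>u. G u k l)"
    and off: "\<And>u k l. u\<in>{0..T} \<Longrightarrow> k \<noteq> l \<Longrightarrow> 0 \<le> G u k l"
    and bnd: "\<And>u k l. u\<in>{0..T} \<Longrightarrow> \<bar>G u k l\<bar> \<le> GB"
  shows "\<exists>P. markov_transition T G P \<and> (\<forall>s\<in>{0..T}. \<forall>r\<in>{s..T}. \<forall>i j. 0 \<le> P s r i j)"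
proof -
  have GB: "GB \<ge> 0" using bnd[of 0 undefined undefined] T by auto
  define A where "A r = (\<chi> k l. G r k l + (if k = l then GB else 0))" for r
  define f where "f r M = (\<chi> i j. \<Sum>k\<in>UNIV. (M::real^'n^'n) $ i $ k * A r $ k $ j)" for r M
  define C where "C = {M::real^'n^'n. \<forall>i j. 0 \<le> M $ i $ j}"
  define I :: "real^'n^'n" where "I = (\<chi> i j. if i = j then 1 else 0)"
  define LA where "LA = real CARD('n) * real CARD('n) * real CARD('n) * (2 * GB)"
  have Abnd: "\<bar>A r $ k $ j\<bar> \<le> 2 * GB" if "r \<in> {0..T}" for r k j
    using bnd[OF that, of k j] GB by (auto simp: A_def)
  have Anonneg: "0 \<le> A r $ k $ j" if "r \<in> {0..T}" for r k j
    using bnd[OF that, of k j] off[OF that, of k j] by (auto simp: A_def)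
  have LA0: "0 \<le> LA" unfolding LA_def using GB by simp
  have lip: "norm (f t x - f t y) \<le> LA * norm (x - y)" if t: "t \<in> {0..T}" for t x y
  proof -
    define D where "D = x - y"
    have eq: "f t x - f t y = (\<chi> i j. \<Sum>k\<in>UNIV. D $ i $ k * A t $ k $ j)"
      by (simp add: f_def D_def vec_eq_iff sum_subtractf algebra_simps)
    have c: "\<bar>(\<Sum>k\<in>UNIV. D $ i $ k * A t $ k $ j)\<bar> \<le> real CARD('n) * (2 * GB) * norm D" for i j
    proof -
      have "\<bar>(\<Sum>k\<in>UNIV. D $ i $ k * A t $ k $ j)\<bar> \<le> (\<Sum>k\<in>UNIV. \<bar>D $ i $ k * A t $ k $ j\<bar>)" by (rule sum_abs)
      also have "\<dots> \<le> (\<Sum>k\<in>(UNIV::'n set). norm D * (2 * GB))"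
        by (rule sum_mono) (simp add: abs_mult mult_mono abs_nth2_le Abnd[OF t] GB)
      also have "\<dots> = real CARD('n) * (2 * GB) * norm D" by simp
      finally show ?thesis .
    qed
    have "norm (f t x - f t y) \<le> (\<Sum>i\<in>UNIV. norm ((f t x - f t y) $ i))" by (rule norm_vec_le_sum)
    also have "\<dots> \<le> (\<Sum>i\<in>(UNIV::'n set). \<Sum>j\<in>(UNIV::'n set). real CARD('n) * (2 * GB) * norm D)"
    proof (rule sum_mono)
      fix i
      have "norm ((f t x - f t y) $ i) \<le> (\<Sum>j\<in>UNIV. \<bar>(f t x - f t y) $ i $ j\<bar>)" by (rule norm_le_l1_cart)
      also have "\<dots> \<le> (\<Sum>j\<in>(UNIV::'n set). real CARD('n) * (2 * GB) * norm D)"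
        by (rule sum_mono) (simp add: eq c)
      finally show "norm ((f t x - f t y) $ i) \<le> (\<Sum>j\<in>(UNIV::'n set). real CARD('n) * (2 * GB) * norm D)" .
    qed
    also have "\<dots> = LA * norm (x - y)" by (simp add: LA_def D_def)
    finally show ?thesis .
  qed
  have fcont: "continuous_on {0..T} (\<lambda>t. f t y)" for y
    unfolding f_def A_def by (intro continuous_intros cont)
  have closedC: "closed C"
    unfolding C_def by (intro closed_Collect_all closed_Collect_le continuous_intros)
  have IC: "I \<in> C" by (simp add: C_def I_def)
  have ex: "\<exists>M. M s = I \<and> (\<forall>t\<in>{s..T}. (M has_vector_derivative f t (M t)) (at t within {s..T}) \<and> M t \<in> C)"
    if s: "s \<in> {0..T}" for s
  proof (rule picard[OF _ LA0 _ _ closedC IC])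
    show "s \<le> T" using s by auto
    show lip2: "\<And>t x y. t \<in> {s..T} \<Longrightarrow> norm (f t x - f t y) \<le> LA * norm (x - y)" using lip s by auto
    show fc2: "continuous_on {s..T} (\<lambda>t. f t y)" for y by (rule continuous_on_subset[OF fcont]) (use s in auto)
    fix y t assume yc: "continuous_on {s..T} y" and yC: "\<forall>r\<in>{s..T}. y r \<in> C" and t: "t \<in> {s..T}"
    have sub: "{s..t} \<subseteq> {s..T}" using t by auto
    have "continuous_on {s..T} (\<lambda>r. f r (y r))"
      by (rule cont_comp_lip[OF lip2 fc2 yc])
    then have intg: "(\<lambda>r. f r (y r)) integrable_on {s..t}"
      by (rule integrable_continuous_real[OF continuous_on_subset[OF _ sub]])
    show "I + integral {s..t} (\<lambda>r. f r (y r)) \<in> C"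
      unfolding C_def
    proof (intro CollectI allI)
      fix i j
      have "integral {s..t} ((\<lambda>X. X $ i $ j) \<circ> (\<lambda>r. f r (y r))) = integral {s..t} (\<lambda>r. f r (y r)) $ i $ j"
        by (rule integral_linear[OF intg bl_nth2])
      moreover have "0 \<le> integral {s..t} ((\<lambda>X. X $ i $ j) \<circ> (\<lambda>r. f r (y r)))"
      proof (rule integral_nonneg)
        show "((\<lambda>X. X $ i $ j) \<circ> (\<lambda>r. f r (y r))) integrable_on {s..t}"
          by (rule integrable_linear[OF intg bl_nth2])
        fix r assume r: "r \<in> {s..t}"
        then have r0: "r \<in> {0..T}" "r \<in> {s..T}" using s t by auto
        have yn: "0 \<le> y r $ a $ c" for a c using yC r0(2) unfolding C_def by blast
        show "0 \<le> ((\<lambda>X. X $ i $ j) \<circ> (\<lambda>r. f r (y r))) r"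
          unfolding f_def o_def vec_lambda_beta
          by (intro sum_nonneg mult_nonneg_nonneg yn Anonneg[OF r0(1)])
      qed
      ultimately show "0 \<le> (I + integral {s..t} (\<lambda>r. f r (y r))) $ i $ j"
        by (simp add: I_def)
    qed
  qed
  then have "\<forall>s\<in>{0..T}. \<exists>M. M s = I \<and> (\<forall>t\<in>{s..T}. (M has_vector_derivative f t (M t)) (at t within {s..T}) \<and> M t \<in> C)"
    by blast
  from bchoice[OF this] obtain Mf where Mf0: "\<forall>s\<in>{0..T}. Mf s s = I \<and> (\<forall>t\<in>{s..T}. (Mf s has_vector_derivative f t (Mf s t)) (at t within {s..T}) \<and> Mf s t \<in> C)"
    by (elim exE)
  have Mf: "Mf s s = I \<and> (\<forall>t\<in>{s..T}. (Mf s has_vector_derivative f t (Mf s t)) (at t within {s..T}) \<and> Mf s t \<in> C)"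
    if "s \<in> {0..T}" for s
    using Mf0 that by (rule bspec)
  define P where "P s r i j = exp (-(GB * (r - s))) * Mf s r $ i $ j" for s r i j
  show ?thesis
  proof (intro exI conjI)
    show "\<forall>s\<in>{0..T}. \<forall>r\<in>{s..T}. \<forall>i j. 0 \<le> P s r i j"
    proof (intro ballI allI)
      fix s r i j assume s: "s \<in> {0..T}" and r: "r \<in> {s..T}"
      have "Mf s r \<in> C" using Mf[OF s] r by blast
      then show "0 \<le> P s r i j" unfolding P_def C_def by simp
    qed
    show "markov_transition T G P"
      unfolding markov_transition_def
    proof (intro ballI conjI allI)
      fix s i j assume s: "s \<in> {0..T}"
      show "P s s i j = (if i = j then 1 else 0)" using Mf[OF s] by (simp add: P_def I_def)
      fix u assume u: "u \<in> {s..T}"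
      have "((\<lambda>r. Mf s r $ i $ j) has_vector_derivative f u (Mf s u) $ i $ j) (at u within {s..T})"
      proof -
        have "(Mf s has_vector_derivative f u (Mf s u)) (at u within {s..T})" using Mf[OF s] u by blast
        from bl_vector_deriv[OF bl_nth2 this] show ?thesis .
      qed
      then have dM: "((\<lambda>r. Mf s r $ i $ j) has_real_derivative f u (Mf s u) $ i $ j) (at u within {s..T})"
        by (simp add: has_real_derivative_iff_has_vector_derivative)
      have de: "((\<lambda>r. exp (-(GB * (r - s)))) has_real_derivative exp (-(GB * (u - s))) * (-GB)) (at u within {s..T})"
        by (auto intro!: derivative_eq_intros)
      have "((\<lambda>r. P s r i j) has_real_derivative exp (-(GB * (u - s))) * (f u (Mf s u) $ i $ j) + exp (-(GB * (u - s))) * (-GB) * Mf s u $ i $ j) (at u within {s..T})"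
        unfolding P_def by (rule DERIV_mult'[OF de dM])
      moreover have "exp (-(GB * (u - s))) * (f u (Mf s u) $ i $ j) + exp (-(GB * (u - s))) * (-GB) * Mf s u $ i $ j
          = (\<Sum>k\<in>UNIV. P s u i k * G u k j)"
      proof -
        have d: "(\<Sum>k\<in>UNIV. Mf s u $ i $ k * (if k = j then GB else 0)) = Mf s u $ i $ j * GB"
        proof -
          have e: "(\<lambda>k. Mf s u $ i $ k * (if k = j then GB else 0)) = (\<lambda>k. if k = j then Mf s u $ i $ j * GB else 0)"
            by auto
          show ?thesis unfolding e by simp
        qed
        have fe: "f u (Mf s u) $ i $ j = (\<Sum>k\<in>UNIV. Mf s u $ i $ k * G u k j) + Mf s u $ i $ j * GB"
          by (simp add: f_def A_def distrib_left sum.distrib d)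
        have s1: "(\<Sum>k\<in>UNIV. P s u i k * G u k j) = exp (-(GB * (u - s))) * (\<Sum>k\<in>UNIV. Mf s u $ i $ k * G u k j)"
          by (simp add: P_def sum_distrib_left mult.assoc)
        show ?thesis unfolding s1 fe by (simp add: algebra_simps)
      qed
      ultimately show "((\<lambda>r. P s r i j) has_real_derivative (\<Sum>k\<in>UNIV. P s u i k * G u k j)) (at u within {s..T})"
        by simp
    qed
  qed
qed

lemma vdiam_upper:
  fixes z :: "('d::finite,'n::finite) config"
  shows "norm (snd (z $ j) - snd (z $ l)) \<le> Vdiam z"
proof -
  have "norm (snd (z $ j) - snd (z $ l)) \<le> (SUP l. norm (snd (z $ j) - snd (z $ l)))"
    by (rule cSUP_upper) (auto intro: bdd_above_finite)
  also have "\<dots> \<le> Vdiam z"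
    unfolding Vdiam_def by (rule cSUP_upper[of j UNIV "\<lambda>j. SUP l. norm (snd (z $ j) - snd (z $ l))"]) (auto intro: bdd_above_finite)
  finally show ?thesis .
qed

lemma vdiam_step:
  fixes z w :: "('d::finite,'n::finite) config" and P :: "'n \<Rightarrow> 'n \<Rightarrow> real"
  assumes nn: "\<And>i j. 0 \<le> P i j" and rs: "\<And>i. (\<Sum>j\<in>UNIV. P i j) = 1"
    and rep: "\<And>i. snd (w $ i) = (\<Sum>j\<in>UNIV. P i j *\<^sub>R snd (z $ j))"
  shows "Vdiam w \<le> Vdiam z"
proof -
  define v where "v j = snd (z $ j)" for j
  have key: "norm (snd (w $ i) - snd (w $ k)) \<le> Vdiam z" for i k
  proof -
    have e1: "(\<Sum>j\<in>UNIV. \<Sum>l\<in>UNIV. (P i j * P k l) *\<^sub>R v j) = (\<Sum>j\<in>UNIV. P i j *\<^sub>R v j)"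
    proof -
      have "(\<Sum>j\<in>UNIV. \<Sum>l\<in>UNIV. (P i j * P k l) *\<^sub>R v j) = (\<Sum>j\<in>UNIV. (\<Sum>l\<in>UNIV. P i j * P k l) *\<^sub>R v j)"
        by (simp add: scaleR_sum_left)
      also have "\<dots> = (\<Sum>j\<in>UNIV. P i j *\<^sub>R v j)"
        by (simp add: sum_distrib_left[symmetric] rs)
      finally show ?thesis .
    qed
    have e2: "(\<Sum>j\<in>UNIV. \<Sum>l\<in>UNIV. (P i j * P k l) *\<^sub>R v l) = (\<Sum>l\<in>UNIV. P k l *\<^sub>R v l)"
    proof -
      have "(\<Sum>j\<in>UNIV. \<Sum>l\<in>UNIV. (P i j * P k l) *\<^sub>R v l) = (\<Sum>l\<in>UNIV. \<Sum>j\<in>UNIV. (P i j * P k l) *\<^sub>R v l)"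
        by (rule sum.swap)
      also have "\<dots> = (\<Sum>l\<in>UNIV. (\<Sum>j\<in>UNIV. P i j * P k l) *\<^sub>R v l)"
        by (simp add: scaleR_sum_left)
      also have "\<dots> = (\<Sum>l\<in>UNIV. P k l *\<^sub>R v l)"
        by (simp add: sum_distrib_right[symmetric] rs)
      finally show ?thesis .
    qed
    have "snd (w $ i) - snd (w $ k) = (\<Sum>j\<in>UNIV. \<Sum>l\<in>UNIV. (P i j * P k l) *\<^sub>R (v j - v l))"
      by (simp add: rep v_def[symmetric] scaleR_diff_right sum_subtractf e1 e2)
    note eqw = this
    have "norm (snd (w $ i) - snd (w $ k)) \<le> (\<Sum>j\<in>UNIV. \<Sum>l\<in>UNIV. norm ((P i j * P k l) *\<^sub>R (v j - v l)))"
    proof -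
      have "norm (\<Sum>j\<in>UNIV. \<Sum>l\<in>UNIV. (P i j * P k l) *\<^sub>R (v j - v l)) \<le> (\<Sum>j\<in>UNIV. norm (\<Sum>l\<in>UNIV. (P i j * P k l) *\<^sub>R (v j - v l)))"
        by (rule norm_sum)
      also have "\<dots> \<le> (\<Sum>j\<in>UNIV. \<Sum>l\<in>UNIV. norm ((P i j * P k l) *\<^sub>R (v j - v l)))"
        by (rule sum_mono) (rule norm_sum)
      finally show ?thesis unfolding eqw by simp
    qed
    also have "\<dots> \<le> (\<Sum>j\<in>UNIV. \<Sum>l\<in>UNIV. (P i j * P k l) * Vdiam z)"
    proof (intro sum_mono)
      fix j l
      show "norm ((P i j * P k l) *\<^sub>R (v j - v l)) \<le> (P i j * P k l) * Vdiam z"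
        using nn[of i j] nn[of k l] vdiam_upper[of z j l] unfolding v_def
        by (simp add: abs_mult mult_left_mono)
    qed
    also have "\<dots> = Vdiam z"
      using rs[of i] rs[of k] by (simp add: sum_distrib_right[symmetric] sum_distrib_left[symmetric] mult.assoc)
    finally show ?thesis .
  qed
  show ?thesis
    unfolding Vdiam_def[of w]
    by (intro cSUP_least) (auto intro: key)
qed

theorem theorem2p6:
  fixes \<alpha> :: real
    and Psi :: "'n::finite \<Rightarrow> 'n \<Rightarrow> ('d::finite,'n) config \<Rightarrow> real"
    and z0 :: "('d,'n) config"
  assumes alpha_pos: "\<alpha> > 0"
    and nonneg: "\<And>i j z. i \<noteq> j \<Longrightarrow> Psi i j z \<ge> 0"
    and bdd: "\<And>i j. i \<noteq> j \<Longrightarrow> bounded (range (Psi i j))"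
    and loclip: "\<And>i j z. i \<noteq> j \<Longrightarrow>
        \<exists>r>0. \<exists>L. L-lipschitz_on (cball z r) (Psi i j)"
  shows "\<exists>z. is_solution \<alpha> Psi z0 z
     \<and> (\<forall>w. is_solution \<alpha> Psi z0 w \<longrightarrow> (\<forall>t\<ge>0. w t = z t))
     \<and> (\<forall>T>0.
          (\<exists>P. markov_transition T (\<lambda>u k l. \<alpha> * Qmat Psi (z (T - u)) k l) P)
        \<and> (\<forall>P. markov_transition T (\<lambda>u k l. \<alpha> * Qmat Psi (z (T - u)) k l) P \<longrightarrow>
             (\<forall>m t i. t \<in> {0..T} \<longrightarrow>
                snd (z t $ i) $ m = (\<Sum>j\<in>UNIV. P (T - t) T i j * (snd (z 0 $ j) $ m)))))
     \<and> (\<forall>s t. 0 \<le> s \<and> s \<le> t \<longrightarrow> Vdiam (z t) \<le> Vdiam (z s))"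
proof -
  have "\<exists>c\<ge>0. \<forall>p::'n\<times>'n. fst p \<noteq> snd p \<longrightarrow> (\<forall>z. \<bar>Psi (fst p) (snd p) z\<bar> \<le> c)"
  proof (rule finite_uniform)
    fix p :: "'n \<times> 'n" assume "fst p \<noteq> snd p"
    then have "bounded (range (Psi (fst p) (snd p)))" by (rule bdd)
    then show "\<exists>c. \<forall>z. \<bar>Psi (fst p) (snd p) z\<bar> \<le> c" by (simp add: bounded_real)
  next
    fix p :: "'n \<times> 'n" and c c' :: real
    assume "\<forall>z. \<bar>Psi (fst p) (snd p) z\<bar> \<le> c" "c \<le> c'"
    then show "\<forall>z. \<bar>Psi (fst p) (snd p) z\<bar> \<le> c'" by (meson order_trans)
  qed
  then obtain c where c0: "c \<ge> 0" and c: "\<forall>p::'n\<times>'n. fst p \<noteq> snd p \<longrightarrow> (\<forall>z. \<bar>Psi (fst p) (snd p) z\<bar> \<le> c)"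
    by blast
  have B: "\<bar>Psi i j z\<bar> \<le> c" if "i \<noteq> j" for i j z
    using spec[OF c, of "(i,j)"] that by simp
  define Q0 where "Q0 = real CARD('n) * c"
  have QB: "\<bar>Qmat Psi z i j\<bar> \<le> Q0" for z i j
    unfolding Q0_def by (rule Qmat_bound[OF c0 B])
  have lipR: "\<exists>L. L-lipschitz_on (cball 0 R) (rhs \<alpha> Psi)" for R
  proof -
    define R' where "R' = max R 0"
    have R': "R' \<ge> 0" unfolding R'_def by simp
    have "\<exists>c\<ge>0. \<forall>p::'n\<times>'n. fst p \<noteq> snd p \<longrightarrow> c-lipschitz_on (cball 0 R') (Psi (fst p) (snd p))"
    proof (rule finite_uniform)
      fix p :: "'n \<times> 'n" assume p: "fst p \<noteq> snd p"
      show "\<exists>c. c-lipschitz_on (cball 0 R') (Psi (fst p) (snd p))"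
        by (rule lip_on_cball) (rule loclip[OF p])
    next
      fix p :: "'n \<times> 'n" and c c' :: real
      assume "c-lipschitz_on (cball 0 R') (Psi (fst p) (snd p))" "c \<le> c'"
      then show "c'-lipschitz_on (cball 0 R') (Psi (fst p) (snd p))" by (rule lipschitz_on_mono[OF _ subset_refl])
    qed
    then obtain LP where LP0: "LP \<ge> 0" and LP: "\<forall>p::'n\<times>'n. fst p \<noteq> snd p \<longrightarrow> LP-lipschitz_on (cball 0 R') (Psi (fst p) (snd p))"
      by blast
    have LPij: "LP-lipschitz_on (cball 0 R') (Psi i j)" if "i \<noteq> j" for i j
      using spec[OF LP, of "(i,j)"] that by simp
    have QL: "\<bar>Qmat Psi z i j - Qmat Psi w i j\<bar> \<le> (real CARD('n) * LP) * norm (z - w)"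
      if z: "z \<in> cball 0 R'" and w: "w \<in> cball 0 R'" for z w i j
    proof (cases "i = j")
      case True
      have "\<bar>Qmat Psi z i j - Qmat Psi w i j\<bar> = \<bar>\<Sum>k\<in>UNIV-{i}. Psi i k w - Psi i k z\<bar>"
        using True by (simp add: Qmat_def sum_subtractf)
      also have "\<dots> \<le> (\<Sum>k\<in>UNIV-{i}. \<bar>Psi i k w - Psi i k z\<bar>)" by (rule sum_abs)
      also have "\<dots> \<le> (\<Sum>k\<in>UNIV-{i}. LP * norm (z - w))"
      proof (rule sum_mono)
        fix k assume k: "k \<in> UNIV - {i}"
        have "dist (Psi i k w) (Psi i k z) \<le> LP * dist w z"
          by (rule lipschitz_onD[OF LPij w z]) (use k in auto)
        then show "\<bar>Psi i k w - Psi i k z\<bar> \<le> LP * norm (z - w)"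
          by (simp add: dist_real_def dist_norm norm_minus_commute)
      qed
      also have "\<dots> = real (CARD('n) - 1) * LP * norm (z - w)" by (simp add: card_Diff_singleton)
      also have "\<dots> \<le> real CARD('n) * LP * norm (z - w)"
        using LP0 by (intro mult_right_mono) auto
      finally show ?thesis by simp
    next
      case False
      have "dist (Psi i j z) (Psi i j w) \<le> LP * dist z w"
        by (rule lipschitz_onD[OF LPij[OF False] z w])
      then have "\<bar>Qmat Psi z i j - Qmat Psi w i j\<bar> \<le> LP * norm (z - w)"
        using False by (simp add: Qmat_def dist_real_def dist_norm)
      also have "\<dots> \<le> (real CARD('n) * LP) * norm (z - w)"
      proof (rule mult_right_mono)
        show "LP \<le> real CARD('n) * LP" using LP0 mult_right_mono[of 1 "real CARD('n)" LP] by simp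
      qed simp
      finally show ?thesis .
    qed
    have "(real CARD('n) * (1 + \<bar>\<alpha>\<bar> * real CARD('n) * ((real CARD('n) * LP) * (2*R') + Q0 * 2)))-lipschitz_on (cball 0 R') (rhs \<alpha> Psi)"
      by (rule rhs_lip[OF QB QL _ _ R']) (use LP0 in auto)
    then have "(real CARD('n) * (1 + \<bar>\<alpha>\<bar> * real CARD('n) * ((real CARD('n) * LP) * (2*R') + Q0 * 2)))-lipschitz_on (cball 0 R) (rhs \<alpha> Psi)"
      by (rule lipschitz_on_subset) (auto simp: R'_def)
    then show ?thesis by blast
  qed
  obtain Z where Zsol: "is_solution \<alpha> Psi z0 Z" and Zuniq: "\<forall>w. is_solution \<alpha> Psi z0 w \<longrightarrow> (\<forall>t\<ge>0. w t = Z t)"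
    using ode_global[OF QB lipR] by blast
  have Zd: "(Z has_vector_derivative rhs \<alpha> Psi (Z t)) (at t within {0..})" if "t \<ge> 0" for t
    using Zsol that unfolding is_solution_def by blast
  have Zc: "continuous_on {0..} Z" by (rule deriv_cont) (use Zd in auto)
  have Psic: "continuous_on UNIV (Psi i j)" if "i \<noteq> j" for i j
    by (rule loclip_cont) (rule loclip[OF that])
  have Qc: "continuous_on UNIV (\<lambda>z. Qmat Psi z k l)" for k l
  proof (cases "k = l")
    case True
    have "continuous_on UNIV (\<lambda>z. - (\<Sum>m\<in>UNIV-{k}. Psi k m z))"
      by (intro continuous_intros) (use Psic in auto)
    then show ?thesis using True by (simp add: Qmat_def)
  next
    case False
    then show ?thesis using Psic[OF False] by (simp add: Qmat_def)
  qed
  have Gc: "continuous_on {0..T} (\<lambda>u. \<alpha> * Qmat Psi (Z (T - u)) k l)" if T: "0 \<le> T" for T k l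
  proof -
    have "continuous_on {0..T} (\<lambda>u. Z (T - u))"
      by (rule continuous_on_compose2[OF Zc]) (auto intro!: continuous_intros)
    then have "continuous_on {0..T} (\<lambda>u. Qmat Psi (Z (T - u)) k l)"
      by (rule continuous_on_compose2[OF Qc]) auto
    then show ?thesis by (intro continuous_intros)
  qed
  have rowsG: "(\<Sum>l\<in>UNIV. \<alpha> * Qmat Psi (Z (T - u)) k l) = 0" for T u k
    by (simp add: sum_distrib_left[symmetric] Qmat_rowsum)
  have Pex: "\<exists>P. markov_transition T (\<lambda>u k l. \<alpha> * Qmat Psi (Z (T - u)) k l) P \<and> (\<forall>s\<in>{0..T}. \<forall>r\<in>{s..T}. \<forall>i j. 0 \<le> P s r i j)"
    if T: "0 \<le> T" for T
  proof (rule markov_exists[OF T Gc[OF T]])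
    fix u :: real and k l :: 'n assume "u \<in> {0..T}" "k \<noteq> l"
    then show "0 \<le> \<alpha> * Qmat Psi (Z (T - u)) k l"
      using alpha_pos nonneg[of k l] by (simp add: Qmat_def)
  next
    fix u :: real and k l :: 'n
    show "\<bar>\<alpha> * Qmat Psi (Z (T - u)) k l\<bar> \<le> \<bar>\<alpha>\<bar> * Q0"
      by (simp add: abs_mult mult_left_mono QB)
  qed
  show ?thesis
  proof (intro exI conjI)
    show "is_solution \<alpha> Psi z0 Z" by (rule Zsol)
    show "\<forall>w. is_solution \<alpha> Psi z0 w \<longrightarrow> (\<forall>t\<ge>0. w t = Z t)" by (rule Zuniq)
    show "\<forall>T>0. (\<exists>P. markov_transition T (\<lambda>u k l. \<alpha> * Qmat Psi (Z (T - u)) k l) P) \<and>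
        (\<forall>P. markov_transition T (\<lambda>u k l. \<alpha> * Qmat Psi (Z (T - u)) k l) P \<longrightarrow>
             (\<forall>m t i. t \<in> {0..T} \<longrightarrow>
                snd (Z t $ i) $ m = (\<Sum>j\<in>UNIV. P (T - t) T i j * (snd (Z 0 $ j) $ m))))"
    proof (intro allI impI conjI)
      fix T :: real assume T: "0 < T"
      show "\<exists>P. markov_transition T (\<lambda>u k l. \<alpha> * Qmat Psi (Z (T - u)) k l) P"
        using Pex[of T] T by auto
      fix P m t i
      assume mk: "markov_transition T (\<lambda>u k l. \<alpha> * Qmat Psi (Z (T - u)) k l) P" and t: "t \<in> {0..T}"
      have "snd (Z (T - (T - t)) $ i) $ m = (\<Sum>j\<in>UNIV. P (T - t) T i j * snd (Z (T - T) $ j) $ m)"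
        by (rule markov_repr[OF Zd mk]) (use t in auto)
      then show "snd (Z t $ i) $ m = (\<Sum>j\<in>UNIV. P (T - t) T i j * (snd (Z 0 $ j) $ m))" by simp
    qed
    show "\<forall>s t. 0 \<le> s \<and> s \<le> t \<longrightarrow> Vdiam (Z t) \<le> Vdiam (Z s)"
    proof (intro allI impI)
      fix s t :: real assume st: "0 \<le> s \<and> s \<le> t"
      show "Vdiam (Z t) \<le> Vdiam (Z s)"
      proof (cases "s = t")
        case True then show ?thesis by simp
      next
        case False
        then have T: "0 \<le> t" using st by auto
        obtain P where mk: "markov_transition t (\<lambda>u k l. \<alpha> * Qmat Psi (Z (t - u)) k l) P"
          and Pn: "\<forall>s\<in>{0..t}. \<forall>r\<in>{s..t}. \<forall>i j. 0 \<le> P s r i j"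
          using Pex[OF T] by blast
        show ?thesis
        proof (rule vdiam_step[where P="\<lambda>i j. P 0 (t - s) i j"])
          fix i j show "0 \<le> P 0 (t - s) i j" using Pn st by auto
        next
          fix i show "(\<Sum>j\<in>UNIV. P 0 (t - s) i j) = 1"
            by (rule markov_rowsum[OF mk]) (use rowsG st in auto)
        next
          fix i
          show "snd (Z t $ i) = (\<Sum>j\<in>UNIV. P 0 (t - s) i j *\<^sub>R snd (Z s $ j))"
          proof (subst vec_eq_iff, intro allI)
            fix m
            have "snd (Z (t - 0) $ i) $ m = (\<Sum>j\<in>UNIV. P 0 (t - s) i j * snd (Z (t - (t - s)) $ j) $ m)"
              by (rule markov_repr[OF Zd mk]) (use st in auto)
            then show "snd (Z t $ i) $ m = (\<Sum>j\<in>UNIV. P 0 (t - s) i j *\<^sub>R snd (Z s $ j)) $ m" by simp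
          qed
        qed
      qed
    qed
  qed
qed

end
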